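(* Let $(\pi_k)_{k=0}^K$ be deterministic policies on an MDP as in the context. Define $q^{\pi'_0} := q^{\pi_0}$, $v^{\pi'_k} := \pi_k q^{\pi'_k}$, and $q^{\pi'_k} := r + \gamma P v^{\pi'_{k-1}}$ for $k\in\{1,\dots,K\}$. Define $\sigma_0^2 := P(v^{\pi_0})^2 - (Pv^{\pi_0})^2$ and, for $k\in\{1,\dots,K\}$, $\sigma_k^2 := P(v^{\pi'_{k-1}})^2 - (Pv^{\pi'_{k-1}})^2$ (squares componentwise), with $\sigma_k := \sqrt{\sigma_k^2}$. Then for every $k\in\{1,\dots,K\}$, $$\sum_{j=0}^{k-1}\gamma^{j+1}P_{k-j}^{k-1}\sigma_{k-j}\leq\sqrt{2H^3}\,\mathbf{1}.$$
   Context: MDP: finite state set $\mathcal{X}$, finite action set $\mathcal{A}$, discount $\gamma\in[0,1)$, reward $r\in[-1,1]^{\mathcal{X}\times\mathcal{A}}$, transition kernel $P(y|x,a)$, $H=1/(1-\gamma)$. $P$ is the matrix in $\mathbb{R}^{(\mathcal{X}\times\mathcal{A})\times\mathcal{X}}$ with $(Pv)(x,a)=\sum_yP(y|x,a)v(y)$; a policy $\pi$ is the matrix in $\mathbb{R}^{\mathcal{X}\times(\mathcal{X}\times\mathcal{A})}$ with $(\pi q)(x) = \sum_a\pi(a|x)q(x,a)$; $P^\pi := P\pi$; $q^\pi$ is the unique fixed point of $q\mapsto r+\gamma P^\pi q$ and $v^\pi=\pi q^\pi$. For $i\ge j$, $P_j^i := P^{\pi_i}P^{\pi_{i-1}}\cdots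 P^{\pi_j}$, and $P_j^i:=I$ if $i<j$. $\mathbf 1$ is the all-ones vector; inequality is componentwise. *)

theory Defs
  imports Complex_Main
begin

text \<open>Transition kernel P :: ('x \<times> 'a) \<Rightarrow> 'x \<Rightarrow> real, P xa y = P(y|x,a).\<close>

definition stochastic_kernel :: "('x::finite \<times> 'a::finite \<Rightarrow> 'x \<Rightarrow> real) \<Rightarrow> bool" where
  "stochastic_kernel P \<longleftrightarrow> (\<forall>xa y. 0 \<le> P xa y) \<and> (\<forall>xa. (\<Sum>y\<in>UNIV. P xa y) = 1)"

definition Papp :: "('x::finite \<times> 'a \<Rightarrow> 'x \<Rightarrow> real) \<Rightarrow> ('x \<Rightarrow> real) \<Rightarrow> ('x \<times> 'a \<Rightarrow> real)" where
  "Papp P v = (\<lambda>xa. \<Sum>y\<in>UNIV. P xa y * v y)"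

text \<open>(pi q)(x) = sum_a pi(a|x) q(x,a) = q(x, pi x) for deterministic pi\<close>
definition pol_app :: "('x \<Rightarrow> 'a) \<Rightarrow> ('x \<times> 'a \<Rightarrow> real) \<Rightarrow> ('x \<Rightarrow> real)" where
  "pol_app \<pi> q = (\<lambda>x. q (x, \<pi> x))"

definition Ppi :: "('x::finite \<times> 'a \<Rightarrow> 'x \<Rightarrow> real) \<Rightarrow> ('x \<Rightarrow> 'a) \<Rightarrow> ('x \<times> 'a \<Rightarrow> real) \<Rightarrow> ('x \<times> 'a \<Rightarrow> real)" where
  "Ppi P \<pi> q = Papp P (pol_app \<pi> q)"

definition qpi :: "('x::finite \<times> 'a \<Rightarrow> 'x \<Rightarrow> real) \<Rightarrow> real \<Rightarrow> ('x \<times> 'a \<Rightarrow> real) \<Rightarrow> ('x \<Rightarrow> 'a) \<Rightarrow> ('x \<times> 'a \<Rightarrow> real)" where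
  "qpi P \<gamma> r \<pi> = (THE q. q = (\<lambda>xa. r xa + \<gamma> * Ppi P \<pi> q xa))"

definition vpi :: "('x::finite \<times> 'a \<Rightarrow> 'x \<Rightarrow> real) \<Rightarrow> real \<Rightarrow> ('x \<times> 'a \<Rightarrow> real) \<Rightarrow> ('x \<Rightarrow> 'a) \<Rightarrow> ('x \<Rightarrow> real)" where
  "vpi P \<gamma> r \<pi> = pol_app \<pi> (qpi P \<gamma> r \<pi>)"

text \<open>Product of n factors applied to q: P^{pi_{j+n-1}} ... P^{pi_j} q\<close>
fun Pprod_n :: "('x::finite \<times> 'a \<Rightarrow> 'x \<Rightarrow> real) \<Rightarrow> (nat \<Rightarrow> 'x \<Rightarrow> 'a) \<Rightarrow> nat \<Rightarrow> nat \<Rightarrow> ('x \<times> 'a \<Rightarrow> real) \<Rightarrow> ('x \<times> 'a \<Rightarrow> real)" where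
  "Pprod_n P \<pi>s j 0 q = q"
| "Pprod_n P \<pi>s j (Suc n) q = Ppi P (\<pi>s (j + n)) (Pprod_n P \<pi>s j n q)"

text \<open>P_j^i = P^{pi_i} ... P^{pi_j} (identity if i < j), applied to q\<close>
definition Pprod :: "('x::finite \<times> 'a \<Rightarrow> 'x \<Rightarrow> real) \<Rightarrow> (nat \<Rightarrow> 'x \<Rightarrow> 'a) \<Rightarrow> nat \<Rightarrow> nat \<Rightarrow> ('x \<times> 'a \<Rightarrow> real) \<Rightarrow> ('x \<times> 'a \<Rightarrow> real)" where
  "Pprod P \<pi>s j i q = Pprod_n P \<pi>s j (Suc i - j) q"

fun qprime :: "('x::finite \<times> 'a \<Rightarrow> 'x \<Rightarrow> real) \<Rightarrow> real \<Rightarrow> ('x \<times> 'a \<Rightarrow> real) \<Rightarrow> (nat \<Rightarrow> 'x \<Rightarrow> 'a) \<Rightarrow> nat \<Rightarrow> ('x \<times> 'a \<Rightarrow> real)" where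
  "qprime P \<gamma> r \<pi>s 0 = qpi P \<gamma> r (\<pi>s 0)"
| "qprime P \<gamma> r \<pi>s (Suc k) = (\<lambda>xa. r xa + \<gamma> * Papp P (pol_app (\<pi>s k) (qprime P \<gamma> r \<pi>s k)) xa)"

definition vprime :: "('x::finite \<times> 'a \<Rightarrow> 'x \<Rightarrow> real) \<Rightarrow> real \<Rightarrow> ('x \<times> 'a \<Rightarrow> real) \<Rightarrow> (nat \<Rightarrow> 'x \<Rightarrow> 'a) \<Rightarrow> nat \<Rightarrow> ('x \<Rightarrow> real)" where
  "vprime P \<gamma> r \<pi>s k = pol_app (\<pi>s k) (qprime P \<gamma> r \<pi>s k)"

definition varP :: "('x::finite \<times> 'a \<Rightarrow> 'x \<Rightarrow> real) \<Rightarrow> ('x \<Rightarrow> real) \<Rightarrow> ('x \<times> 'a \<Rightarrow> real)" where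
  "varP P v = (\<lambda>xa. Papp P (\<lambda>y. (v y)^2) xa - (Papp P v xa)^2)"

definition sigma :: "('x::finite \<times> 'a \<Rightarrow> 'x \<Rightarrow> real) \<Rightarrow> real \<Rightarrow> ('x \<times> 'a \<Rightarrow> real) \<Rightarrow> (nat \<Rightarrow> 'x \<Rightarrow> 'a) \<Rightarrow> nat \<Rightarrow> ('x \<times> 'a \<Rightarrow> real)" where
  "sigma P \<gamma> r \<pi>s k = (\<lambda>xa. sqrt (varP P (if k = 0 then vpi P \<gamma> r (\<pi>s 0) else vprime P \<gamma> r \<pi>s (k - 1)) xa))"

end

theory Submission
  imports Defs
begin


lemma Ppi_eq: "Ppi P \<pi> f xa = (\<Sum>y\<in>UNIV. P xa y * f (y, \<pi> y))"
  by (simp add: Ppi_def Papp_def pol_app_def)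

lemma sk_nonneg: "stochastic_kernel P \<Longrightarrow> 0 \<le> P xa y"
  unfolding stochastic_kernel_def by blast

lemma sk_sum: "stochastic_kernel P \<Longrightarrow> (\<Sum>y\<in>UNIV. P xa y) = 1"
  unfolding stochastic_kernel_def by blast

lemma row_const: "stochastic_kernel P \<Longrightarrow> (\<Sum>y\<in>UNIV. P xa y * c) = c"
  by (simp add: sum_distrib_right[symmetric] sk_sum)

lemma row_mono: "stochastic_kernel P \<Longrightarrow> (\<And>y. f y \<le> g y) \<Longrightarrow>
   (\<Sum>y\<in>UNIV. P xa y * f y) \<le> (\<Sum>y\<in>UNIV. P xa y * g y)"
  by (intro sum_mono mult_left_mono) (auto simp: sk_nonneg)

lemma row_abs: assumes "stochastic_kernel P" "\<And>y. \<bar>f y\<bar> \<le> M"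
  shows "\<bar>\<Sum>y\<in>UNIV. P xa y * f y\<bar> \<le> M"
proof -
  have "\<bar>\<Sum>y\<in>UNIV. P xa y * f y\<bar> \<le> (\<Sum>y\<in>UNIV. \<bar>P xa y * f y\<bar>)" by (rule sum_abs)
  also have "\<dots> = (\<Sum>y\<in>UNIV. P xa y * \<bar>f y\<bar>)"
    using sk_nonneg[OF assms(1)] by (simp add: abs_mult)
  also have "\<dots> \<le> (\<Sum>y\<in>UNIV. P xa y * M)" by (rule row_mono[OF assms(1)]) (use assms(2) in auto)
  also have "\<dots> = M" by (rule row_const[OF assms(1)])
  finally show ?thesis .
qed

lemma row_var: assumes "stochastic_kernel P"
  shows "(\<Sum>y\<in>UNIV. P xa y * g y)^2 \<le> (\<Sum>y\<in>UNIV. P xa y * (g y)^2)"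
proof -
  define s where "s = (\<Sum>y\<in>UNIV. P xa y * g y)"
  have "0 \<le> (\<Sum>y\<in>UNIV. P xa y * (g y - s)^2)"
    using sk_nonneg[OF assms] by (intro sum_nonneg) auto
  also have "\<dots> = (\<Sum>y\<in>UNIV. P xa y * (g y)^2 - 2 * s * (P xa y * g y) + s^2 * P xa y)"
    by (rule sum.cong) (auto simp: power2_eq_square algebra_simps)
  also have "\<dots> = (\<Sum>y\<in>UNIV. P xa y * (g y)^2) - (\<Sum>y\<in>UNIV. 2 * s * (P xa y * g y)) + (\<Sum>y\<in>UNIV. s^2 * P xa y)"
    by (simp only: sum.distrib sum_subtractf)
  also have "\<dots> = (\<Sum>y\<in>UNIV. P xa y * (g y)^2) - s^2"
  proof -
    have h1: "(\<Sum>y\<in>UNIV. 2 * s * (P xa y * g y)) = 2 * s * s"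
      by (simp only: sum_distrib_left[symmetric] s_def)
    have h2: "(\<Sum>y\<in>UNIV. s^2 * P xa y) = s^2"
      by (simp only: sum_distrib_left[symmetric] sk_sum[OF assms] mult_1_right)
    show ?thesis unfolding h1 h2 by (simp add: power2_eq_square)
  qed
  finally show ?thesis unfolding s_def by simp
qed

lemma row_sqrt: assumes "stochastic_kernel P" "\<And>y. 0 \<le> f y"
  shows "(\<Sum>y\<in>UNIV. P xa y * sqrt (f y)) \<le> sqrt (\<Sum>y\<in>UNIV. P xa y * f y)"
proof -
  have "(\<Sum>y\<in>UNIV. P xa y * sqrt (f y))^2 \<le> (\<Sum>y\<in>UNIV. P xa y * (sqrt (f y))^2)"
    by (rule row_var[OF assms(1)])
  also have "\<dots> = (\<Sum>y\<in>UNIV. P xa y * f y)" using assms(2) by simp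
  finally show ?thesis by (simp add: real_le_rsqrt)
qed

lemma fix_unique:
  assumes sk: "stochastic_kernel P" and g: "0 \<le> \<gamma>" "\<gamma> < 1"
    and f1: "\<And>xa. q1 xa = r xa + \<gamma> * Ppi P \<pi> q1 xa"
    and f2: "\<And>xa. q2 xa = r xa + \<gamma> * Ppi P \<pi> q2 xa"
  shows "q1 = q2"
proof -
  define d where "d = Max (range (\<lambda>z. \<bar>q1 z - q2 z\<bar>))"
  have dge: "\<bar>q1 z - q2 z\<bar> \<le> d" for z unfolding d_def by (rule Max_ge) auto
  have le: "\<bar>q1 z - q2 z\<bar> \<le> \<gamma> * d" for z
  proof -
    have "q1 z - q2 z = \<gamma> * (\<Sum>y\<in>UNIV. P z y * (q1 (y, \<pi> y) - q2 (y, \<pi> y)))"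
      by (subst f1, subst f2) (simp add: Ppi_eq sum_subtractf algebra_simps)
    also have "\<bar>\<dots>\<bar> \<le> \<gamma> * d" using g
      by (simp add: abs_mult) (intro mult_left_mono row_abs[OF sk] dge, auto)
    finally show ?thesis .
  qed
  have fin: "finite (range (\<lambda>z. \<bar>q1 z - q2 z\<bar>))" by simp
  obtain z0 where z0: "d = \<bar>q1 z0 - q2 z0\<bar>"
    using Max_in[OF fin] unfolding d_def[symmetric] by blast
  have dd: "d \<le> \<gamma> * d" using le[of z0] z0 by simp
  have d0: "0 \<le> d" using z0 by simp
  have "\<not> 0 < d"
  proof
    assume "0 < d"
    then have "\<gamma> * d < 1 * d" by (rule mult_strict_right_mono[OF g(2)])
    then show False using dd by simp
  qed
  then have "d = 0" using d0 by simp
  show ?thesis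
  proof
    fix z
    have "\<bar>q1 z - q2 z\<bar> \<le> 0" using dge[of z] \<open>d = 0\<close> by simp
    then show "q1 z = q2 z" by simp
  qed
qed

lemma fix_bound:
  assumes sk: "stochastic_kernel P" and g: "0 \<le> \<gamma>" "\<gamma> < 1" and rb: "\<And>xa. \<bar>r xa\<bar> \<le> 1"
    and f1: "\<And>xa. q xa = r xa + \<gamma> * Ppi P \<pi> q xa"
  shows "\<bar>q xa\<bar> \<le> 1 / (1 - \<gamma>)"
proof -
  define M where "M = Max (range (\<lambda>z. \<bar>q z\<bar>))"
  have Mge: "\<bar>q z\<bar> \<le> M" for z unfolding M_def by (rule Max_ge) auto
  have le: "\<bar>q z\<bar> \<le> 1 + \<gamma> * M" for z
  proof -
    have "\<bar>q z\<bar> \<le> \<bar>r z\<bar> + \<bar>\<gamma> * Ppi P \<pi> q z\<bar>" by (subst f1) (rule abs_triangle_ineq)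
    also have "\<bar>\<gamma> * Ppi P \<pi> q z\<bar> \<le> \<gamma> * M" using g
      by (simp add: abs_mult Ppi_eq) (intro mult_left_mono row_abs[OF sk] Mge, auto)
    finally show ?thesis using rb[of z] by linarith
  qed
  have fin: "finite (range (\<lambda>z. \<bar>q z\<bar>))" by simp
  obtain z0 where z0: "M = \<bar>q z0\<bar>"
    using Max_in[OF fin] unfolding M_def[symmetric] by blast
  have "M \<le> 1 + \<gamma> * M" using le[of z0] z0 by simp
  then have "M * (1 - \<gamma>) \<le> 1" by (simp add: algebra_simps)
  then have "M \<le> 1 / (1 - \<gamma>)" using g by (simp add: field_simps)
  then show ?thesis using Mge[of xa] by linarith
qed

lemma fix_exists:
  assumes sk: "stochastic_kernel P" and g: "0 \<le> \<gamma>" "\<gamma> < 1" and rb: "\<And>xa. \<bar>r xa\<bar> \<le> 1"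
  shows "\<exists>q. q = (\<lambda>xa. r xa + \<gamma> * Ppi P \<pi> q xa)"
proof -
  define T where "T = (\<lambda>q xa. r xa + \<gamma> * Ppi P \<pi> q xa)"
  define u where "u n = (T ^^ n) (\<lambda>_. 0)" for n
  have uS: "u (Suc n) = T (u n)" for n by (simp add: u_def)
  have Tdiff: "T f xa - T h xa = \<gamma> * (\<Sum>y\<in>UNIV. P xa y * (f (y, \<pi> y) - h (y, \<pi> y)))" for f h xa
    by (simp add: T_def Ppi_eq sum_subtractf algebra_simps)
  have du: "\<bar>u (Suc n) xa - u n xa\<bar> \<le> \<gamma>^n" for n xa
  proof (induction n arbitrary: xa)
    case 0 then show ?case using rb by (simp add: u_def T_def Ppi_eq)
  next
    case (Suc n)
    have "\<bar>u (Suc (Suc n)) xa - u (Suc n) xa\<bar>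
       = \<gamma> * \<bar>\<Sum>y\<in>UNIV. P xa y * (u (Suc n) (y, \<pi> y) - u n (y, \<pi> y))\<bar>"
      unfolding uS[of "Suc n"] uS[of n] Tdiff using g by (simp add: abs_mult)
    also have "\<dots> \<le> \<gamma> * \<gamma>^n" using g by (intro mult_left_mono row_abs[OF sk] Suc) auto
    finally show ?case by simp
  qed
  define L where "L xa = (\<Sum>n. u (Suc n) xa - u n xa)" for xa
  have conv: "(\<lambda>n. u n xa) \<longlonglongrightarrow> L xa" for xa
  proof -
    have "summable (\<lambda>n. u (Suc n) xa - u n xa)"
    proof (rule summable_comparison_test[of _ "\<lambda>n. \<gamma>^n"])
      show "\<exists>N. \<forall>n\<ge>N. norm (u (Suc n) xa - u n xa) \<le> \<gamma>^n"
        by (intro exI[of _ 0] allI impI) (simp only: real_norm_def du)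
      show "summable (\<lambda>n. \<gamma>^n)" by (rule summable_geometric) (use g in simp)
    qed
    then have "(\<lambda>n. \<Sum>i<n. u (Suc i) xa - u i xa) \<longlonglongrightarrow> L xa"
      unfolding L_def by (rule summable_LIMSEQ)
    moreover have "(\<Sum>i<n. u (Suc i) xa - u i xa) = u n xa" for n
      using sum_lessThan_telescope[of "\<lambda>i. u i xa" n] by (simp add: u_def)
    ultimately show ?thesis by simp
  qed
  have "L xa = T L xa" for xa
  proof -
    have c1: "(\<lambda>n. u (Suc n) xa) \<longlonglongrightarrow> L xa" by (rule LIMSEQ_Suc[OF conv])
    have "(\<lambda>n. \<Sum>y\<in>UNIV. P xa y * u n (y, \<pi> y)) \<longlonglongrightarrow> (\<Sum>y\<in>UNIV. P xa y * L (y, \<pi> y))"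
      by (rule tendsto_sum, rule tendsto_mult_left, rule conv)
    then have "(\<lambda>n. r xa + \<gamma> * (\<Sum>y\<in>UNIV. P xa y * u n (y, \<pi> y))) \<longlonglongrightarrow> r xa + \<gamma> * (\<Sum>y\<in>UNIV. P xa y * L (y, \<pi> y))"
      by (rule tendsto_add[OF tendsto_const tendsto_mult_left])
    then have c2: "(\<lambda>n. u (Suc n) xa) \<longlonglongrightarrow> T L xa"
      unfolding uS T_def Ppi_eq .
    from c1 c2 show ?thesis by (rule LIMSEQ_unique)
  qed
  note Lfix = this
  show ?thesis
  proof (rule exI[of _ L], rule ext)
    fix xa
    from Lfix[of xa] show "L xa = r xa + \<gamma> * Ppi P \<pi> L xa" unfolding T_def .
  qed
qed

lemma qpi_props:
  assumes sk: "stochastic_kernel P" and g: "0 \<le> \<gamma>" "\<gamma> < 1" and rb: "\<And>xa. \<bar>r xa\<bar> \<le> 1"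
  shows "\<bar>qpi P \<gamma> r \<pi> xa\<bar> \<le> 1 / (1 - \<gamma>)"
proof -
  have ex1: "\<exists>!q. q = (\<lambda>xa. r xa + \<gamma> * Ppi P \<pi> q xa)"
  proof -
    from fix_exists[OF sk g rb] obtain q where q: "q = (\<lambda>xa. r xa + \<gamma> * Ppi P \<pi> q xa)" ..
    show ?thesis
    proof (rule ex1I[of _ q])
      fix q' assume "q' = (\<lambda>xa. r xa + \<gamma> * Ppi P \<pi> q' xa)"
      note E = this
      show "q' = q"
      proof (rule fix_unique[OF sk g])
        show "q' xa = r xa + \<gamma> * Ppi P \<pi> q' xa" for xa by (rule fun_cong[OF E])
        show "q xa = r xa + \<gamma> * Ppi P \<pi> q xa" for xa by (rule fun_cong[OF q])
      qed
    qed (rule q)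
  qed
  have E: "qpi P \<gamma> r \<pi> = (\<lambda>xa. r xa + \<gamma> * Ppi P \<pi> (qpi P \<gamma> r \<pi>) xa)"
    unfolding qpi_def by (rule theI'[OF ex1])
  show ?thesis by (rule fix_bound[OF sk g rb]) (rule fun_cong[OF E])
qed



fun Sseq :: "('x::finite \<times> 'a \<Rightarrow> 'x \<Rightarrow> real) \<Rightarrow> real \<Rightarrow> ('x \<times> 'a \<Rightarrow> real) \<Rightarrow> (nat \<Rightarrow> 'x \<Rightarrow> 'a) \<Rightarrow> nat \<Rightarrow> ('x \<times> 'a \<Rightarrow> real)" where
  "Sseq P \<gamma> r \<pi>s 0 = (\<lambda>xa. 0)"
| "Sseq P \<gamma> r \<pi>s (Suc k) = (\<lambda>xa. \<gamma> * Ppi P (\<pi>s k) (Sseq P \<gamma> r \<pi>s k) xa + \<gamma> * sigma P \<gamma> r \<pi>s (Suc k) xa)"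

fun Wseq :: "('x::finite \<times> 'a \<Rightarrow> 'x \<Rightarrow> real) \<Rightarrow> real \<Rightarrow> ('x \<times> 'a \<Rightarrow> real) \<Rightarrow> (nat \<Rightarrow> 'x \<Rightarrow> 'a) \<Rightarrow> nat \<Rightarrow> ('x \<times> 'a \<Rightarrow> real)" where
  "Wseq P \<gamma> r \<pi>s 0 = (\<lambda>xa. 0)"
| "Wseq P \<gamma> r \<pi>s (Suc k) = (\<lambda>xa. \<gamma> * Ppi P (\<pi>s k) (Wseq P \<gamma> r \<pi>s k) xa + \<gamma> * varP P (vprime P \<gamma> r \<pi>s k) xa)"

fun aseq :: "real \<Rightarrow> nat \<Rightarrow> real" where
  "aseq \<gamma> 0 = 0"
| "aseq \<gamma> (Suc k) = \<gamma> * aseq \<gamma> k + \<gamma>"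

lemma Ppi_sum: "Ppi P \<pi> (\<lambda>z. \<Sum>i\<in>A. c i * f i z) xa = (\<Sum>i\<in>A. c i * Ppi P \<pi> (f i) xa)"
  unfolding Ppi_eq by (simp add: sum_distrib_left mult.left_commute sum.swap[of _ UNIV A])

lemma sum_eq: "(\<Sum>j<k. \<gamma>^(j+1) * Pprod P \<pi>s (k - j) (k - 1) (sigma P \<gamma> r \<pi>s (k - j)) xa)
   = Sseq P \<gamma> r \<pi>s k xa"
proof (induction k arbitrary: xa)
  case 0 then show ?case by simp
next
  case (Suc k)
  define G where "G i = Pprod_n P \<pi>s (k - i) i (sigma P \<gamma> r \<pi>s (k - i))" for i
  have Sk: "Sseq P \<gamma> r \<pi>s k = (\<lambda>z. \<Sum>i<k. \<gamma>^(i+1) * G i z)"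
  proof
    fix z
    have "Sseq P \<gamma> r \<pi>s k z = (\<Sum>j<k. \<gamma>^(j+1) * Pprod P \<pi>s (k - j) (k - 1) (sigma P \<gamma> r \<pi>s (k - j)) z)"
      using Suc.IH by simp
    also have "\<dots> = (\<Sum>i<k. \<gamma>^(i+1) * G i z)"
    proof (rule sum.cong)
      fix i assume "i \<in> {..<k}"
      then have "Suc (k - 1) - (k - i) = i" by auto
      then show "\<gamma>^(i+1) * Pprod P \<pi>s (k - i) (k - 1) (sigma P \<gamma> r \<pi>s (k - i)) z = \<gamma>^(i+1) * G i z"
        by (simp add: Pprod_def G_def)
    qed simp
    finally show "Sseq P \<gamma> r \<pi>s k z = (\<Sum>i<k. \<gamma>^(i+1) * G i z)" .
  qed
  have "(\<Sum>j<Suc k. \<gamma>^(j+1) * Pprod P \<pi>s (Suc k - j) (Suc k - 1) (sigma P \<gamma> r \<pi>s (Suc k - j)) xa)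
     = \<gamma> * sigma P \<gamma> r \<pi>s (Suc k) xa
       + (\<Sum>i<k. \<gamma>^(i+2) * Pprod P \<pi>s (k - i) k (sigma P \<gamma> r \<pi>s (k - i)) xa)"
    by (subst sum.lessThan_Suc_shift) (simp add: Pprod_def)
  also have "(\<Sum>i<k. \<gamma>^(i+2) * Pprod P \<pi>s (k - i) k (sigma P \<gamma> r \<pi>s (k - i)) xa)
     = (\<Sum>i<k. \<gamma> * (\<gamma>^(i+1) * Ppi P (\<pi>s k) (G i) xa))"
  proof (rule sum.cong)
    fix i assume "i \<in> {..<k}"
    then have "Suc k - (k - i) = Suc i" "k - i + i = k" by auto
    then show "\<gamma>^(i+2) * Pprod P \<pi>s (k - i) k (sigma P \<gamma> r \<pi>s (k - i)) xa = \<gamma> * (\<gamma>^(i+1) * Ppi P (\<pi>s k) (G i) xa)"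
      by (simp add: Pprod_def G_def)
  qed simp
  also have "\<dots> = \<gamma> * Ppi P (\<pi>s k) (Sseq P \<gamma> r \<pi>s k) xa"
    unfolding Sk Ppi_sum by (simp add: sum_distrib_left)
  finally show ?case by simp
qed



lemma H_eq: "(\<gamma>::real) < 1 \<Longrightarrow> 1 + \<gamma> * (1 / (1 - \<gamma>)) = 1 / (1 - \<gamma>)"
  by (simp add: field_simps)

lemma qprime_bound:
  assumes sk: "stochastic_kernel P" and g: "0 \<le> \<gamma>" "\<gamma> < 1" and rb: "\<And>xa. \<bar>r xa\<bar> \<le> 1"
  shows "\<bar>qprime P \<gamma> r \<pi>s k xa\<bar> \<le> 1 / (1 - \<gamma>)"
proof (induction k arbitrary: xa)
  case 0 then show ?case using qpi_props[OF sk g rb] by simp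
next
  case (Suc k)
  have "\<bar>qprime P \<gamma> r \<pi>s (Suc k) xa\<bar>
      \<le> \<bar>r xa\<bar> + \<gamma> * \<bar>\<Sum>y\<in>UNIV. P xa y * qprime P \<gamma> r \<pi>s k (y, \<pi>s k y)\<bar>"
    using g by (simp add: Papp_def pol_app_def abs_mult) (rule abs_triangle_ineq[THEN order_trans], simp add: abs_mult)
  also have "\<dots> \<le> 1 + \<gamma> * (1 / (1 - \<gamma>))"
    using g rb[of xa] by (intro add_mono mult_left_mono row_abs[OF sk] Suc.IH) auto
  finally show ?case using H_eq[OF g(2)] by simp
qed

lemma varP_nonneg: "stochastic_kernel P \<Longrightarrow> 0 \<le> varP P v xa"
  unfolding varP_def Papp_def using row_var[of P xa v] by simp

lemma W_nonneg:
  assumes sk: "stochastic_kernel P" and g: "0 \<le> \<gamma>"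
  shows "0 \<le> Wseq P \<gamma> r \<pi>s k xa"
proof (induction k arbitrary: xa)
  case 0 then show ?case by simp
next
  case (Suc k)
  have "0 \<le> Ppi P (\<pi>s k) (Wseq P \<gamma> r \<pi>s k) xa"
    unfolding Ppi_eq using Suc.IH sk_nonneg[OF sk] by (intro sum_nonneg) auto
  then show ?case using g varP_nonneg[OF sk] by simp
qed

lemma a_bounds:
  assumes g: "0 \<le> \<gamma>" "\<gamma> < 1"
  shows "0 \<le> aseq \<gamma> k \<and> aseq \<gamma> k \<le> \<gamma> * (1 / (1 - \<gamma>))"
proof (induction k)
  case 0 then show ?case using g by simp
next
  case (Suc k)
  have "\<gamma> * aseq \<gamma> k + \<gamma> \<le> \<gamma> * (\<gamma> * (1 / (1 - \<gamma>))) + \<gamma>"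
    using Suc g by (intro add_mono mult_left_mono) auto
  also have "\<dots> = \<gamma> * (1 + \<gamma> * (1 / (1 - \<gamma>)))" by (simp add: algebra_simps)
  also have "\<dots> = \<gamma> * (1 / (1 - \<gamma>))" using H_eq[OF g(2)] by simp
  finally show ?case using Suc g by simp
qed

lemma Z_bound:
  assumes sk: "stochastic_kernel P" and g: "0 \<le> \<gamma>" "\<gamma> < 1" and rb: "\<And>xa. \<bar>r xa\<bar> \<le> 1"
  shows "\<gamma> * Wseq P \<gamma> r \<pi>s k xa + (qprime P \<gamma> r \<pi>s k xa)^2 \<le> 2 * (1 / (1 - \<gamma>))^2"
proof (induction k arbitrary: xa)
  case 0
  have "\<bar>qprime P \<gamma> r \<pi>s 0 xa\<bar> \<le> 1 / (1 - \<gamma>)" by (rule qprime_bound[OF sk g rb])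
  then have "\<bar>qprime P \<gamma> r \<pi>s 0 xa\<bar>^2 \<le> (1 / (1 - \<gamma>))^2"
    by (rule power_mono) simp
  then have "(qprime P \<gamma> r \<pi>s 0 xa)^2 \<le> (1 / (1 - \<gamma>))^2" by simp
  then have "(qprime P \<gamma> r \<pi>s 0 xa)^2 \<le> 2 * (1 / (1 - \<gamma>))^2"
    using zero_le_power2[of "1 / (1 - \<gamma>)"] by linarith
  then show ?case by simp
next
  case (Suc k)
  define H where "H = 1 / (1 - \<gamma>)"
  define q where "q = qprime P \<gamma> r \<pi>s k"
  define W where "W = Wseq P \<gamma> r \<pi>s k"
  define v where "v y = q (y, \<pi>s k y)" for y
  define Pv where "Pv = (\<Sum>y\<in>UNIV. P xa y * v y)"
  define qs where "qs = qprime P \<gamma> r \<pi>s (Suc k) xa"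
  have qs_eq: "qs = r xa + \<gamma> * Pv"
    by (simp add: qs_def Pv_def v_def q_def Papp_def pol_app_def)
  have var_eq: "varP P (vprime P \<gamma> r \<pi>s k) xa = (\<Sum>y\<in>UNIV. P xa y * (v y)^2) - Pv^2"
    by (simp add: varP_def Papp_def vprime_def pol_app_def Pv_def v_def q_def)
  have W_eq: "Wseq P \<gamma> r \<pi>s (Suc k) xa = \<gamma> * (\<Sum>y\<in>UNIV. P xa y * W (y, \<pi>s k y))
       + \<gamma> * ((\<Sum>y\<in>UNIV. P xa y * (v y)^2) - Pv^2)"
    by (simp only: Wseq.simps var_eq) (simp add: Ppi_eq W_def)
  have split: "\<gamma> * Wseq P \<gamma> r \<pi>s (Suc k) xa + qs^2
     = \<gamma> * (\<Sum>y\<in>UNIV. P xa y * (\<gamma> * W (y, \<pi>s k y) + \<gamma> * (v y)^2)) + (2 * r xa * qs - (r xa)^2)"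
  proof -
    define SW where "SW = (\<Sum>y\<in>UNIV. P xa y * W (y, \<pi>s k y))"
    define SV where "SV = (\<Sum>y\<in>UNIV. P xa y * (v y)^2)"
    have s1: "(\<Sum>y\<in>UNIV. P xa y * (\<gamma> * W (y, \<pi>s k y) + \<gamma> * (v y)^2)) = \<gamma> * SW + \<gamma> * SV"
      by (simp add: SW_def SV_def sum.distrib sum_distrib_left distrib_left mult.left_commute)
    show ?thesis unfolding W_eq qs_eq s1 SW_def[symmetric] SV_def[symmetric]
      by (simp add: power2_eq_square algebra_simps)
  qed
  have inner: "\<gamma> * W (y, \<pi>s k y) + \<gamma> * (v y)^2 \<le> 2 * H^2" for y
  proof -
    have "\<gamma> * (v y)^2 \<le> (v y)^2" using g by (simp add: mult_left_le_one_le)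
    then show ?thesis using Suc.IH[of "(y, \<pi>s k y)"] by (simp add: W_def v_def q_def H_def)
  qed
  have A: "(\<Sum>y\<in>UNIV. P xa y * (\<gamma> * W (y, \<pi>s k y) + \<gamma> * (v y)^2)) \<le> 2 * H^2"
    using row_mono[OF sk inner, of xa] row_const[OF sk] by simp
  have qsb: "\<bar>qs\<bar> \<le> H" unfolding qs_def H_def by (rule qprime_bound[OF sk g rb])
  have B: "2 * r xa * qs - (r xa)^2 \<le> 2 * H"
  proof -
    have "2 * r xa * qs \<le> 2 * \<bar>r xa\<bar> * \<bar>qs\<bar>" by (simp add: abs_mult[symmetric] mult.assoc)
    also have "\<dots> \<le> 2 * 1 * H" using rb[of xa] qsb by (intro mult_mono) auto
    finally show ?thesis using zero_le_power2[of "r xa"] by linarith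
  qed
  have "\<gamma> * Wseq P \<gamma> r \<pi>s (Suc k) xa + qs^2 \<le> \<gamma> * (2 * H^2) + 2 * H"
    unfolding split using A B g by (intro add_mono mult_left_mono) auto
  also have "\<dots> = 2 * H^2"
  proof -
    have h: "H * (1 - \<gamma>) = 1" unfolding H_def using g by simp
    have "2 * H = 2 * H * (H * (1 - \<gamma>))" using h by simp
    then show ?thesis by (simp add: power2_eq_square algebra_simps)
  qed
  finally show ?case by (simp add: qs_def H_def)
qed

lemma cs2': "(a::real) * b + c * d \<le> sqrt ((a^2 + c^2) * (b^2 + d^2))"
proof -
  have "(a^2 + c^2) * (b^2 + d^2) - (a * b + c * d)^2 = (a * d - c * b)^2"
    by (simp add: power2_eq_square algebra_simps)
  then have "(a * b + c * d)^2 \<le> (a^2 + c^2) * (b^2 + d^2)" by (metis diff_ge_0_iff_ge zero_le_power2)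
  then show ?thesis by (rule real_le_rsqrt)
qed

lemma cs2: assumes "0 \<le> x" "0 \<le> y" "0 \<le> u" "0 \<le> v"
  shows "sqrt x * sqrt y + sqrt u * sqrt v \<le> sqrt ((x + u) * (y + v))"
  using cs2'[of "sqrt x" "sqrt y" "sqrt u" "sqrt v"] assms by simp

lemma S_bound:
  assumes sk: "stochastic_kernel P" and g: "0 \<le> \<gamma>" "\<gamma> < 1"
  shows "Sseq P \<gamma> r \<pi>s k xa \<le> sqrt (aseq \<gamma> k * Wseq P \<gamma> r \<pi>s k xa)"
proof (induction k arbitrary: xa)
  case 0 then show ?case by simp
next
  case (Suc k)
  define a where "a = aseq \<gamma> k"
  define W where "W = Wseq P \<gamma> r \<pi>s k"
  define V where "V = varP P (vprime P \<gamma> r \<pi>s k) xa"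
  define PW where "PW = (\<Sum>y\<in>UNIV. P xa y * W (y, \<pi>s k y))"
  have a0: "0 \<le> a" using a_bounds[OF g] by (simp add: a_def)
  have W0: "0 \<le> W z" for z using W_nonneg[OF sk g(1)] by (simp add: W_def)
  have V0: "0 \<le> V" using varP_nonneg[OF sk] by (simp add: V_def)
  have PW0: "0 \<le> PW" unfolding PW_def using W0 sk_nonneg[OF sk] by (intro sum_nonneg) auto
  have "Ppi P (\<pi>s k) (Sseq P \<gamma> r \<pi>s k) xa \<le> (\<Sum>y\<in>UNIV. P xa y * (sqrt a * sqrt (W (y, \<pi>s k y))))"
    unfolding Ppi_eq
  proof (rule row_mono[OF sk])
    fix y
    have "Sseq P \<gamma> r \<pi>s k (y, \<pi>s k y) \<le> sqrt (aseq \<gamma> k * Wseq P \<gamma> r \<pi>s k (y, \<pi>s k y))"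
      by (rule Suc.IH)
    then show "Sseq P \<gamma> r \<pi>s k (y, \<pi>s k y) \<le> sqrt a * sqrt (W (y, \<pi>s k y))"
      by (simp add: a_def W_def real_sqrt_mult)
  qed
  also have "\<dots> = sqrt a * (\<Sum>y\<in>UNIV. P xa y * sqrt (W (y, \<pi>s k y)))"
    by (simp add: sum_distrib_left mult.left_commute)
  also have "\<dots> \<le> sqrt a * sqrt PW"
    unfolding PW_def by (intro mult_left_mono row_sqrt[OF sk] W0) (auto simp: a0)
  finally have P1: "Ppi P (\<pi>s k) (Sseq P \<gamma> r \<pi>s k) xa \<le> sqrt a * sqrt PW" .
  have sg: "sigma P \<gamma> r \<pi>s (Suc k) xa = sqrt V" by (simp add: sigma_def V_def)
  have "Sseq P \<gamma> r \<pi>s (Suc k) xa \<le> \<gamma> * (sqrt a * sqrt PW) + \<gamma> * sqrt V"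
    using P1 g by (simp add: sg mult_left_mono)
  also have "\<dots> = sqrt (\<gamma> * a) * sqrt (\<gamma> * PW) + sqrt \<gamma> * sqrt (\<gamma> * V)"
  proof -
    have e1: "sqrt (\<gamma> * a) * sqrt (\<gamma> * PW) = sqrt (\<gamma>^2 * (a * PW))"
      by (simp add: real_sqrt_mult[symmetric] power2_eq_square ac_simps)
    have e2: "sqrt (\<gamma>^2 * (a * PW)) = \<gamma> * (sqrt a * sqrt PW)"
      using g by (simp add: real_sqrt_mult)
    have e3: "sqrt \<gamma> * sqrt (\<gamma> * V) = sqrt (\<gamma>^2 * V)"
      by (simp add: real_sqrt_mult[symmetric] power2_eq_square ac_simps)
    have e4: "sqrt (\<gamma>^2 * V) = \<gamma> * sqrt V"
      using g by (simp add: real_sqrt_mult)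
    show ?thesis using e1 e2 e3 e4 by simp
  qed
  also have "\<dots> \<le> sqrt ((\<gamma> * a + \<gamma>) * (\<gamma> * PW + \<gamma> * V))"
    using g a0 PW0 V0 by (intro cs2) auto
  also have "\<dots> = sqrt (aseq \<gamma> (Suc k) * Wseq P \<gamma> r \<pi>s (Suc k) xa)"
    by (simp add: a_def PW_def W_def V_def Ppi_eq)
  finally show ?case .
qed



theorem lemma22:
  fixes P :: "'x::finite \<times> 'a::finite \<Rightarrow> 'x \<Rightarrow> real"
    and r :: "'x \<times> 'a \<Rightarrow> real" and \<gamma> :: real
    and \<pi>s :: "nat \<Rightarrow> 'x \<Rightarrow> 'a" and K k :: nat
  assumes "stochastic_kernel P"
    and "0 \<le> \<gamma>" and "\<gamma> < 1"
    and "\<And>xa. \<bar>r xa\<bar> \<le> 1"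
    and "1 \<le> k" and "k \<le> K"
  shows "\<forall>xa. (\<Sum>j<k. \<gamma>^(j+1) * Pprod P \<pi>s (k - j) (k - 1) (sigma P \<gamma> r \<pi>s (k - j)) xa)
           \<le> sqrt (2 * (1 / (1 - \<gamma>))^3)"
proof
  fix xa
  note sk = assms(1) and g = assms(2,3) and rb = assms(4)
  define H where "H = 1 / (1 - \<gamma>)"
  define W where "W = Wseq P \<gamma> r \<pi>s k xa"
  have H0: "0 \<le> H" using g by (simp add: H_def)
  have W0: "0 \<le> W" unfolding W_def by (rule W_nonneg[OF sk g(1)])
  have ab: "0 \<le> aseq \<gamma> k" "aseq \<gamma> k \<le> \<gamma> * H" using a_bounds[OF g] by (auto simp: H_def)
  have gW: "\<gamma> * W \<le> 2 * H^2"
  proof -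
    have "\<gamma> * W + (qprime P \<gamma> r \<pi>s k xa)^2 \<le> 2 * H^2"
      unfolding W_def H_def by (rule Z_bound[OF sk g rb])
    then show ?thesis by (smt (verit) zero_le_power2)
  qed
  have "aseq \<gamma> k * W \<le> \<gamma> * H * W" using ab W0 by (intro mult_right_mono) auto
  also have "\<dots> = H * (\<gamma> * W)" by simp
  also have "\<dots> \<le> H * (2 * H^2)" using gW H0 by (intro mult_left_mono) auto
  finally have aW: "aseq \<gamma> k * W \<le> 2 * H^3" by (simp add: power2_eq_square power3_eq_cube)
  have "(\<Sum>j<k. \<gamma>^(j+1) * Pprod P \<pi>s (k - j) (k - 1) (sigma P \<gamma> r \<pi>s (k - j)) xa)
      = Sseq P \<gamma> r \<pi>s k xa" by (rule sum_eq)
  also have "\<dots> \<le> sqrt (aseq \<gamma> k * W)" unfolding W_def by (rule S_bound[OF sk g])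
  also have "\<dots> \<le> sqrt (2 * H^3)" using aW by simp
  finally show "(\<Sum>j<k. \<gamma>^(j+1) * Pprod P \<pi>s (k - j) (k - 1) (sigma P \<gamma> r \<pi>s (k - j)) xa)
           \<le> sqrt (2 * (1 / (1 - \<gamma>))^3)" by (simp add: H_def)
qed

end
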